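(* In the spectrum pricing game described in the context, let $(\psi_1,\ldots,\psi_n)$ be a symmetric Nash equilibrium. Then for every $i\in\{1,\ldots,n\}$, every point of the support of $\psi_i$ is a best response in state $i$. In particular, $L_i$ and $U_i$ are best responses in state $i$.
   Context: Spectrum pricing game. There are $l\ge 2$ primaries and $m$ secondaries, $1\le m<l$; there are $n$ channel states $1,\ldots,n$, plus state $0$ meaning "unavailable". Each primary owns one channel, which independently of the others is in state $i\in\{1,\ldots,n\}$ with probability $q_i>0$ and in state $0$ with probability $1-q$, where $q=\sum_{i=1}^n q_i\in(0,1)$. For each state $i\ge1$ there is a penalty function $g_i$, continuous and strictly increasing in the price, with inverse $f_i$, also continuous and strictly increasing. Quoting price $p$ for a channel in state $i$ means the channel offers penalty $g_i(p)$; equivalently, choosing penalty $x$ in state $i$ means charging price $f_i(x)$. Higher states are better: $g_i(p)>g_j(p)$ for all $p$ and $f_i(x)<f_j(x)$ for all $x$ whenever $i<j$. There is a transition cost $c>0$ and a maximum acceptable penalty $v$ with $g_1(c)<v$. We assume that all points used below lie in the common domain of the $f_i$, and that for all $j<k$ and all $x>y>g_j(c)$, $$\frac{f_j(y)-c}{f_k(y)-c}<\frac{f_j(x)-c}{f_k(x)-c}. \qquad (\ast)$$ Each primary knows only its own channel state. A primary whose channel is in state $j\ge1$ draws its penalty from a distribution function $\psi_j$, independently of everything else. A primary in state $0$ offers penalty $v+1$, which is equivalent to not offering its channel. If $Y$ channels are offered with penalty at most $v$, the $\min(Y,m)$ channels with the lowest penalties are sold, with ties broken uniformly at random. A primary selling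 at price $p$ earns $p-c$; otherwise it earns $0$. Strategies and equilibrium. A symmetric strategy profile is one in which every primary uses the same $(\psi_1,\ldots,\psi_n)$. Given such a profile, let $r(x)$ be the probability that a given primary's channel offered at penalty $x$ is sold, and set $\phi_j(x)=(f_j(x)-c)\,r(x)$, the expected profit of choosing penalty $x$ in state $j$. A symmetric Nash equilibrium (NE) is a symmetric profile in which no primary, in any state $j$, can increase its expected profit by unilaterally replacing $\psi_j$ with any other distribution. A penalty $x$ is a best response in state $j$ if $\phi_j(x)=\sup_{y\in\mathbb{R}}\phi_j(y)=:u_{j,\max}$. For a distribution function $\psi_i$, write $L_i=\inf\{x:\psi_i(x)>0\}$ and $U_i=\inf\{x:\psi_i(x)=1\}$. *)

theory Defs
  imports "HOL-Probability.Probability"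
begin

text \<open>States are 1..n; q j is the probability of state j;
  a primary in state 0 (probability 1 - sum q) offers penalty v+1.
  psi j is the (probability measure of the) penalty distribution used in state j.\<close>

definition qtot :: "nat \<Rightarrow> (nat \<Rightarrow> real) \<Rightarrow> real" where
  "qtot n q = (\<Sum>j=1..n. q j)"

definition rival_less :: "nat \<Rightarrow> (nat \<Rightarrow> real) \<Rightarrow> real \<Rightarrow> (nat \<Rightarrow> real measure) \<Rightarrow> real \<Rightarrow> real" where
  "rival_less n q v psi x =
     (\<Sum>j=1..n. q j * measure (psi j) {..<x}) + (1 - qtot n q) * (if v + 1 < x then 1 else 0)"

definition rival_eq :: "nat \<Rightarrow> (nat \<Rightarrow> real) \<Rightarrow> real \<Rightarrow> (nat \<Rightarrow> real measure) \<Rightarrow> real \<Rightarrow> real" where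
  "rival_eq n q v psi x =
     (\<Sum>j=1..n. q j * measure (psi j) {x}) + (1 - qtot n q) * (if x = v + 1 then 1 else 0)"

text \<open>Probability of being sold when a rivals are strictly cheaper and b rivals tie
  (ties broken uniformly at random, m channels sold).\<close>
definition win_prob :: "nat \<Rightarrow> nat \<Rightarrow> nat \<Rightarrow> real" where
  "win_prob m a b = (if a < m then min 1 ((real m - real a) / (real b + 1)) else 0)"

text \<open>r(x): probability that a given primary's channel offered at penalty x is sold,
  when the other l-1 primaries independently follow the symmetric profile psi
  (multinomial distribution of the numbers of cheaper / tied rivals).\<close>
definition sale_prob :: "nat \<Rightarrow> nat \<Rightarrow> nat \<Rightarrow> (nat \<Rightarrow> real) \<Rightarrow> real \<Rightarrow> (nat \<Rightarrow> real measure) \<Rightarrow> real \<Rightarrow> real" where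
  "sale_prob l m n q v psi x =
     (if x \<le> v then
        (let pl = rival_less n q v psi x; pe = rival_eq n q v psi x in
         (\<Sum>a\<le>l-1. \<Sum>b\<le>l-1-a.
            real ((l-1) choose a) * real ((l-1-a) choose b)
            * pl ^ a * pe ^ b * (1 - pl - pe) ^ (l-1-a-b) * win_prob m a b))
      else 0)"

definition profit :: "nat \<Rightarrow> nat \<Rightarrow> nat \<Rightarrow> (nat \<Rightarrow> real) \<Rightarrow> (nat \<Rightarrow> real \<Rightarrow> real) \<Rightarrow> real \<Rightarrow> real
                      \<Rightarrow> (nat \<Rightarrow> real measure) \<Rightarrow> nat \<Rightarrow> real \<Rightarrow> real" where
  "profit l m n q f c v psi j x = (f j x - c) * sale_prob l m n q v psi x"

text \<open>Symmetric Nash equilibrium: in each state j, psi j is a distribution on the reals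
  and no deviation to another distribution mu yields a larger expected profit.
  (Deviations with non-integrable profit have expected profit -infinity, since the
  profit is bounded above; they are never profitable.)\<close>
definition symmetric_NE :: "nat \<Rightarrow> nat \<Rightarrow> nat \<Rightarrow> (nat \<Rightarrow> real) \<Rightarrow> (nat \<Rightarrow> real \<Rightarrow> real) \<Rightarrow> real \<Rightarrow> real
                      \<Rightarrow> (nat \<Rightarrow> real measure) \<Rightarrow> bool" where
  "symmetric_NE l m n q f c v psi \<longleftrightarrow>
     (\<forall>j\<in>{1..n}. real_distribution (psi j)) \<and>
     (\<forall>j\<in>{1..n}. integrable (psi j) (profit l m n q f c v psi j) \<and>
        (\<forall>mu. real_distribution mu \<longrightarrow> integrable mu (profit l m n q f c v psi j) \<longrightarrow>
            (\<integral>x. profit l m n q f c v psi j x \<partial>mu) \<le> (\<integral>x. profit l m n q f c v psi j x \<partial>psi j)))"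

definition best_response :: "nat \<Rightarrow> nat \<Rightarrow> nat \<Rightarrow> (nat \<Rightarrow> real) \<Rightarrow> (nat \<Rightarrow> real \<Rightarrow> real) \<Rightarrow> real \<Rightarrow> real
                      \<Rightarrow> (nat \<Rightarrow> real measure) \<Rightarrow> nat \<Rightarrow> real \<Rightarrow> bool" where
  "best_response l m n q f c v psi j x \<longleftrightarrow>
     profit l m n q f c v psi j x = (SUP y. profit l m n q f c v psi j y)"

definition dist_support :: "real measure \<Rightarrow> real set" where
  "dist_support M = {x. \<forall>e>0. measure M {x - e<..<x + e} > 0}"

definition lowL :: "real measure \<Rightarrow> real" where
  "lowL M = Inf {x. cdf M x > 0}"

definition uppU :: "real measure \<Rightarrow> real" where
  "uppU M = Inf {x. cdf M x = 1}"

end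

theory Submission imports Defs begin

definition Rf :: "nat \<Rightarrow> nat \<Rightarrow> real \<Rightarrow> real \<Rightarrow> real" where
  "Rf N m p e = (\<Sum>a\<le>N. \<Sum>b\<le>N-a. real (N choose a) * real ((N-a) choose b)
      * p ^ a * e ^ b * (1 - p - e) ^ (N-a-b) * win_prob m a b)"

lemma Rf_tendsto:
  assumes "(P \<longlongrightarrow> p) F" "(Q \<longlongrightarrow> e) F"
  shows "((\<lambda>y. Rf N m (P y) (Q y)) \<longlongrightarrow> Rf N m p e) F"
  unfolding Rf_def by (intro tendsto_intros assms)

lemma win_nonneg: "0 \<le> win_prob m a b"
  by (simp add: win_prob_def)

lemma win_le: "win_prob m a b \<le> win_prob m a 0"
  by (simp add: win_prob_def)

lemma Rf_nonneg:
  assumes "0 \<le> p" "0 \<le> e" "p + e \<le> 1"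
  shows "0 \<le> Rf N m p e"
  unfolding Rf_def using assms
  by (intro sum_nonneg mult_nonneg_nonneg win_nonneg zero_le_power) auto

lemma Rf_pos:
  assumes "0 \<le> p" "0 \<le> e" "p + e < 1" "1 \<le> m"
  shows "0 < Rf N m p e"
proof -
  have w: "win_prob m 0 0 = 1" using assms by (simp add: win_prob_def)
  show ?thesis unfolding Rf_def
  proof (rule sum_pos2[where i=0])
    show "0 < (\<Sum>b\<le>N-0. real (N choose 0) * real ((N-0) choose b)
      * p ^ 0 * e ^ b * (1 - p - e) ^ (N-0-b) * win_prob m 0 b)"
    proof (rule sum_pos2[where i=0])
      show "0 < real (N choose 0) * real ((N-0) choose 0)
      * p ^ 0 * e ^ 0 * (1 - p - e) ^ (N-0-0) * win_prob m 0 0"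
        using assms w by simp
    qed (use assms in \<open>auto intro!: mult_nonneg_nonneg win_nonneg\<close>)
  qed (use assms in \<open>auto intro!: sum_nonneg mult_nonneg_nonneg win_nonneg\<close>)
qed

lemma Rf_zero: "Rf N m p 0 = (\<Sum>a\<le>N. real (N choose a) * p ^ a * (1 - p) ^ (N-a) * win_prob m a 0)"
proof -
  have "\<And>a. (\<Sum>b\<le>N-a. real (N choose a) * real ((N-a) choose b)
      * p ^ a * (0::real) ^ b * (1 - p - 0) ^ (N-a-b) * win_prob m a b)
     = (\<Sum>b\<le>N-a. if b = 0 then real (N choose a) * p ^ a * (1 - p) ^ (N-a) * win_prob m a 0 else 0)"
    by (intro sum.cong) auto
  then show ?thesis unfolding Rf_def by simp
qed

lemma Rf_strict:
  assumes "0 \<le> p" "0 < e" "p + e \<le> 1" "1 \<le> m" "m \<le> N"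
  shows "Rf N m p e < Rf N m p 0"
proof -
  define s where "s = 1 - p - e"
  have s0: "0 \<le> s" using assms s_def by simp
  have bin: "\<And>a. (1 - p) ^ (N-a) = (\<Sum>b\<le>N-a. real ((N-a) choose b) * e ^ b * s ^ (N-a-b))"
  proof -
    fix a
    have "(1 - p) ^ (N-a) = (e + s) ^ (N-a)" by (simp add: s_def)
    also have "\<dots> = (\<Sum>b\<le>N-a. real ((N-a) choose b) * e ^ b * s ^ (N-a-b))"
      by (simp add: binomial_ring)
    finally show "(1 - p) ^ (N-a) = (\<Sum>b\<le>N-a. real ((N-a) choose b) * e ^ b * s ^ (N-a-b))" .
  qed
  have "Rf N m p 0 - Rf N m p e = (\<Sum>a\<le>N. \<Sum>b\<le>N-a. real (N choose a) * real ((N-a) choose b)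
      * p ^ a * e ^ b * s ^ (N-a-b) * (win_prob m a 0 - win_prob m a b))"
  proof -
    have z: "Rf N m p 0 = (\<Sum>a\<le>N. \<Sum>b\<le>N-a. real (N choose a) * real ((N-a) choose b)
      * p ^ a * e ^ b * s ^ (N-a-b) * win_prob m a 0)"
      unfolding Rf_zero bin by (simp add: sum_distrib_left sum_distrib_right algebra_simps)
    have r: "Rf N m p e = (\<Sum>a\<le>N. \<Sum>b\<le>N-a. real (N choose a) * real ((N-a) choose b)
      * p ^ a * e ^ b * s ^ (N-a-b) * win_prob m a b)"
      unfolding Rf_def s_def by simp
    show ?thesis unfolding z r
      by (simp add: sum_subtractf[symmetric] algebra_simps)
  qed
  also have "\<dots> > 0"
  proof (rule sum_pos2[where i=0])
    show "0 < (\<Sum>b\<le>N-0. real (N choose 0) * real ((N-0) choose b)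
      * p ^ 0 * e ^ b * s ^ (N-0-b) * (win_prob m 0 0 - win_prob m 0 b))"
    proof (rule sum_pos2[where i=N])
      have "real m / (real N + 1) < 1" using assms by simp
      then have "win_prob m 0 N < 1" using assms by (simp add: win_prob_def)
      moreover have "win_prob m 0 0 = 1" using assms by (simp add: win_prob_def)
      ultimately show "0 < real (N choose 0) * real ((N-0) choose N)
      * p ^ 0 * e ^ N * s ^ (N-0-N) * (win_prob m 0 0 - win_prob m 0 N)"
        using assms by simp
    qed (use assms s0 in \<open>auto intro!: mult_nonneg_nonneg simp: win_le\<close>)
  qed (use assms s0 in \<open>auto intro!: sum_nonneg mult_nonneg_nonneg simp: win_le\<close>)
  finally show ?thesis by simp
qed


lemma ev_left: "b < (a::real) \<Longrightarrow> (\<And>y. b < y \<Longrightarrow> y < a \<Longrightarrow> P y) \<Longrightarrow> eventually P (at_left a)"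
  by (rule eventually_mono[OF eventually_at_left_real[of b a]]) auto
lemma ev_right: "a < (b::real) \<Longrightarrow> (\<And>y. a < y \<Longrightarrow> y < b \<Longrightarrow> P y) \<Longrightarrow> eventually P (at_right a)"
  by (rule eventually_mono[OF eventually_at_right_real[of a b]]) auto

context real_distribution begin

lemma less_at_left: "((\<lambda>y. measure M {..<y}) \<longlongrightarrow> measure M {..<x}) (at_left x)"
proof (rule tendsto_sandwich[where f="\<lambda>y. cdf M (2*y - x)" and h="\<lambda>y. measure M {..<x}"])
  have "filterlim (\<lambda>y. 2*y - x) (at_left x) (at_left x)"
  proof -
    have "((\<lambda>y. 2*y - x) \<longlongrightarrow> 2*x - x) (at_left x)"
      by (intro tendsto_intros)
    then have "((\<lambda>y. 2*y - x) \<longlongrightarrow> x) (at_left x)" by simp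
    moreover have "eventually (\<lambda>y. 2*y - x < x) (at_left x)"
      by (rule ev_left[of "x - 1"]) auto
    ultimately show ?thesis
      by (auto simp: filterlim_at elim: eventually_mono)
  qed
  then show "((\<lambda>y. cdf M (2*y - x)) \<longlongrightarrow> measure M {..<x}) (at_left x)"
    using cdf_at_left[of x] by (rule filterlim_compose[rotated])
  show "eventually (\<lambda>y. cdf M (2*y - x) \<le> measure M {..<y}) (at_left x)"
    by (rule ev_left[of "x - 1"]) (auto simp: cdf_def intro!: finite_measure_mono)
  show "eventually (\<lambda>y. measure M {..<y} \<le> measure M {..<x}) (at_left x)"
    by (rule ev_left[of "x - 1"]) (auto intro!: finite_measure_mono)
qed simp

lemma less_at_right: "((\<lambda>y. measure M {..<y}) \<longlongrightarrow> cdf M x) (at_right x)"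
proof (rule tendsto_sandwich[where f="\<lambda>y. cdf M x" and h="\<lambda>y. cdf M y"])
  show "((\<lambda>y. cdf M y) \<longlongrightarrow> cdf M x) (at_right x)"
    using cdf_is_right_cont[of x] by (simp add: continuous_within)
  show "eventually (\<lambda>y. cdf M x \<le> measure M {..<y}) (at_right x)"
    by (rule ev_right[of _ "x + 1"]) (auto simp: cdf_def intro!: finite_measure_mono)
  show "eventually (\<lambda>y. measure M {..<y} \<le> cdf M y) (at_right x)"
    by (rule ev_right[of _ "x + 1"]) (auto simp: cdf_def intro!: finite_measure_mono)
qed simp

lemma cdf_split: "cdf M y = measure M {..<y} + measure M {y}"
proof -
  have "{..y} = {..<y} \<union> {y}" by auto
  then have "measure M {..y} = measure M ({..<y} \<union> {y})" by simp
  also have "\<dots> = measure M {..<y} + measure M {y}"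
    by (intro finite_measure_Union) auto
  finally show ?thesis unfolding cdf_def .
qed

lemma pos_of_cdf:
  assumes "a < s" "s < b" "cdf M a < cdf M s"
  shows "measure M {a<..<b} > 0"
proof -
  have "0 < cdf M s - cdf M a" using assms by simp
  also have "\<dots> = measure M {a<..s}" using cdf_diff_eq[of a s] assms by simp
  also have "\<dots> \<le> measure M {a<..<b}" using assms by (intro finite_measure_mono) auto
  finally show ?thesis .
qed

lemma cdf_left': "(cdf M \<longlongrightarrow> measure M {..<x}) (at_left x)"
  by (rule cdf_at_left)
lemma cdf_right': "(cdf M \<longlongrightarrow> cdf M x) (at_right x)"
  using cdf_is_right_cont[of x] by (simp add: continuous_within)
lemma cdf_le1': "cdf M x \<le> 1"
  by (rule cdf_bounded_prob)
lemma cdf_nonneg': "0 \<le> cdf M x"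
  by (rule cdf_nonneg)
lemma cdf_at_bot': "(cdf M \<longlongrightarrow> 0) at_bot"
  by (rule cdf_lim_at_bot)
lemma cdf_mono': "x \<le> y \<Longrightarrow> cdf M x \<le> cdf M y"
  by (rule cdf_nondecreasing)

end

lemma AE_pos_exists:
  assumes "prob_space M" "AE y in M. P y" "S \<in> sets M" "measure M S > 0"
  shows "\<exists>y\<in>S. P y"
proof (rule ccontr)
  assume nP: "\<not> (\<exists>y\<in>S. P y)"
  from assms(2) obtain N where N: "{x \<in> space M. \<not> P x} \<subseteq> N" "emeasure M N = 0" "N \<in> sets M"
    by (rule AE_E)
  have "S \<subseteq> N" using nP N(1) sets.sets_into_space[OF assms(3)] by auto
  then have "emeasure M S \<le> emeasure M N" using N(3) by (intro emeasure_mono) auto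
  then have "emeasure M S = 0" using N(2) by simp
  then have "measure M S = 0" by (simp add: measure_def)
  with assms(4) show False by simp
qed


theorem mainTheorem5:
  fixes l m n :: nat and q :: "nat \<Rightarrow> real" and f g :: "nat \<Rightarrow> real \<Rightarrow> real"
    and c v :: real and psi :: "nat \<Rightarrow> real measure"
  assumes l2: "l \<ge> 2" and m1: "1 \<le> m" and ml: "m < l"
    and qpos: "\<forall>i\<in>{1..n}. q i > 0"
    and qtot: "0 < (\<Sum>i=1..n. q i)" "(\<Sum>i=1..n. q i) < 1"
    and g_cont: "\<forall>i\<in>{1..n}. continuous_on UNIV (g i)"
    and g_mono: "\<forall>i\<in>{1..n}. strict_mono (g i)"
    and f_cont: "\<forall>i\<in>{1..n}. continuous_on UNIV (f i)"
    and f_mono: "\<forall>i\<in>{1..n}. strict_mono (f i)"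
    and fg_inv: "\<forall>i\<in>{1..n}. \<forall>p. f i (g i p) = p"
    and gf_inv: "\<forall>i\<in>{1..n}. \<forall>x. g i (f i x) = x"
    and g_order: "\<forall>i\<in>{1..n}. \<forall>j\<in>{1..n}. i < j \<longrightarrow> (\<forall>p. g i p > g j p)"
    and f_order: "\<forall>i\<in>{1..n}. \<forall>j\<in>{1..n}. i < j \<longrightarrow> (\<forall>x. f i x < f j x)"
    and cpos: "c > 0"
    and vbound: "g 1 c < v"
    and star: "\<forall>j\<in>{1..n}. \<forall>k\<in>{1..n}. j < k \<longrightarrow> (\<forall>x y. x > y \<and> y > g j c \<longrightarrow>
                 (f j y - c) / (f k y - c) < (f j x - c) / (f k x - c))"
    and NE: "symmetric_NE l m n q f c v psi"
  shows "\<forall>i\<in>{1..n}.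
           (\<forall>x\<in>dist_support (psi i). best_response l m n q f c v psi i x)
           \<and> best_response l m n q f c v psi i (lowL (psi i))
           \<and> best_response l m n q f c v psi i (uppU (psi i))"
proof -
  define P where "P = profit l m n q f c v psi"
  define E where "E j = (\<integral>x. P j x \<partial>psi j)" for j
  define G where "G y = (\<Sum>j=1..n. q j * measure (psi j) {..<y})" for y
  define H where "H y = (\<Sum>j=1..n. q j * measure (psi j) {y})" for y
  define F where "F y = (\<Sum>j=1..n. q j * cdf (psi j) y)" for y
  define N where "N = l - 1"
  define Q where "Q = (\<Sum>i=1..n. q i)"
  have RD: "\<And>j. j \<in> {1..n} \<Longrightarrow> real_distribution (psi j)"
    using NE unfolding symmetric_NE_def by blast
  have INT: "\<And>j. j \<in> {1..n} \<Longrightarrow> integrable (psi j) (P j)"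
    using NE unfolding symmetric_NE_def P_def by blast
  have NEj: "\<And>j mu. j \<in> {1..n} \<Longrightarrow> real_distribution mu \<Longrightarrow> integrable mu (P j) \<Longrightarrow>
      (\<integral>x. P j x \<partial>mu) \<le> E j"
    using NE unfolding symmetric_NE_def P_def E_def by blast
  have q0: "\<And>j. j \<in> {1..n} \<Longrightarrow> 0 \<le> q j" using qpos by (simp add: less_imp_le)
  have FH: "F y = G y + H y" for y
    unfolding F_def G_def H_def sum.distrib[symmetric]
    by (intro sum.cong refl) (simp add: real_distribution.cdf_split[OF RD] algebra_simps)
  have G0: "0 \<le> G y" for y unfolding G_def by (intro sum_nonneg mult_nonneg_nonneg q0) auto
  have H0: "0 \<le> H y" for y unfolding H_def by (intro sum_nonneg mult_nonneg_nonneg q0) auto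
  have FQ: "F y \<le> Q" for y
    unfolding F_def Q_def
    by (intro sum_mono) (use q0 real_distribution.cdf_le1'[OF RD] in \<open>auto intro: mult_left_le\<close>)
  have Q1: "Q < 1" using qtot Q_def by simp
  have Pform: "P j y = (f j y - c) * Rf N m (G y) (H y)" if "y \<le> v" for j y
    using that unfolding P_def profit_def sale_prob_def Rf_def Let_def N_def rival_less_def rival_eq_def
      G_def H_def by simp
  have Pzero: "P j y = 0" if "v < y" for j y
    using that unfolding P_def profit_def sale_prob_def by simp

  have Ple: "P j y \<le> E j" if j: "j \<in> {1..n}" for j y
  proof -
    interpret rd: real_distribution "psi j" using RD[OF j] .
    have meas: "P j \<in> borel_measurable borel"
      using borel_measurable_integrable[OF INT[OF j]] by (simp cong: measurable_cong_sets)
    have rd2: "real_distribution (return borel y)"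
      by (simp add: real_distribution_def real_distribution_axioms_def prob_space_return)
    have ae: "AE z in return borel y. P j z = P j y"
      using meas by (subst AE_return) auto
    have int: "integrable (return borel y) (P j)"
    proof -
      interpret pr: prob_space "return borel y" by (simp add: prob_space_return)
      have "integrable (return borel y) (\<lambda>z. P j y)" by simp
      then show ?thesis using ae meas
        by (subst integrable_cong_AE[where g="\<lambda>z. P j y"]) auto
    qed
    have "(\<integral>z. P j z \<partial>return borel y) = P j y"
      using meas by (simp add: integral_return)
    then show ?thesis using NEj[OF j rd2 int] by simp
  qed
  have AEj: "AE x in psi j. P j x = E j" if j: "j \<in> {1..n}" for j
  proof -
    interpret rd: real_distribution "psi j" using RD[OF j] .
    have i2: "integrable (psi j) (\<lambda>x. E j - P j x)" using INT[OF j] by simp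
    have pu: "measure (psi j) UNIV = 1" using rd.prob_space by simp
    have "(\<integral>x. E j - P j x \<partial>psi j) = 0"
      using INT[OF j] pu by (simp add: E_def)
    then have "AE x in psi j. E j - P j x = 0"
      using integral_nonneg_eq_0_iff_AE[OF i2] Ple[OF j] by simp
    then show ?thesis by eventually_elim simp
  qed

  have n1: "1 \<in> {1..n}"
  proof -
    have "{1..n} \<noteq> ({}::nat set)" using qtot(1) by (metis sum.empty less_irrefl)
    then show ?thesis by simp
  qed
  have fv: "c < f j v" if j: "j \<in> {1..n}" for j
  proof -
    have "c = f 1 (g 1 c)" using fg_inv n1 by simp
    also have "\<dots> < f 1 v" using f_mono n1 vbound by (simp add: strict_mono_less)
    finally have c1: "c < f 1 v" .
    show ?thesis
    proof (cases "j = 1")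
      case False
      then have "f 1 v < f j v" using f_order n1 j by auto
      with c1 show ?thesis by simp
    qed (use c1 in simp)
  qed
  have mN: "m \<le> N" using ml N_def by simp
  have Epos: "0 < E j" if j: "j \<in> {1..n}" for j
  proof -
    have "0 < Rf N m (G v) (H v)"
      using Rf_pos[OF G0 H0 _ m1] FH[of v] FQ[of v] Q1 by simp
    then have "0 < P j v" using Pform[of v j] fv[OF j] by simp
    then show ?thesis using Ple[OF j, of v] by simp
  qed
  have fcont: "((\<lambda>y. f j y) \<longlongrightarrow> f j x) (at x)" if j: "j \<in> {1..n}" for j x
    using f_cont j by (metis continuous_on_def UNIV_I at_within_open open_UNIV)
  have Gl: "(G \<longlongrightarrow> G x) (at_left x)" for x
    unfolding G_def
    by (intro tendsto_sum tendsto_mult_left real_distribution.less_at_left[OF RD]) auto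
  have Fl: "(F \<longlongrightarrow> G x) (at_left x)" for x
    unfolding F_def G_def
    by (intro tendsto_sum tendsto_mult_left real_distribution.cdf_left'[OF RD]) auto
  have Gr: "(G \<longlongrightarrow> F x) (at_right x)" for x
    unfolding G_def F_def
    by (intro tendsto_sum tendsto_mult_left real_distribution.less_at_right[OF RD]) auto
  have Fr: "(F \<longlongrightarrow> F x) (at_right x)" for x
    unfolding F_def
    by (intro tendsto_sum tendsto_mult_left real_distribution.cdf_right'[OF RD]) auto
  have Hl: "(H \<longlongrightarrow> 0) (at_left x)" for x
  proof -
    have "((\<lambda>y. F y - G y) \<longlongrightarrow> G x - G x) (at_left x)" by (intro tendsto_intros Fl Gl)
    then show ?thesis using FH by simp
  qed
  have Hr: "(H \<longlongrightarrow> 0) (at_right x)" for x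
  proof -
    have "((\<lambda>y. F y - G y) \<longlongrightarrow> F x - F x) (at_right x)" by (intro tendsto_intros Fr Gr)
    then show ?thesis using FH by simp
  qed
  have Tl: "((\<lambda>y. (f j y - c) * Rf N m (G y) (H y)) \<longlongrightarrow> (f j x - c) * Rf N m (G x) 0) (at_left x)"
    if j: "j \<in> {1..n}" for j x
    by (intro tendsto_intros Rf_tendsto Gl Hl tendsto_mono[OF at_le fcont[OF j]]) auto
  have Tr: "((\<lambda>y. (f j y - c) * Rf N m (G y) (H y)) \<longlongrightarrow> (f j x - c) * Rf N m (F x) 0) (at_right x)"
    if j: "j \<in> {1..n}" for j x
    by (intro tendsto_intros Rf_tendsto Gr Hr tendsto_mono[OF at_le fcont[OF j]]) auto

  have noatom: "H x = 0" if xv: "x \<le> v" for x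
  proof (rule ccontr)
    assume "H x \<noteq> 0"
    then have Hp: "0 < H x" using H0[of x] by simp
    have "\<exists>j\<in>{1..n}. 0 < measure (psi j) {x}"
    proof (rule ccontr)
      assume "\<not> ?thesis"
      then have "\<forall>j\<in>{1..n}. measure (psi j) {x} = 0"
        using measure_nonneg by (metis linorder_neqE_linordered_idom not_less)
      then have "H x = 0" unfolding H_def by simp
      with Hp show False by simp
    qed
    then obtain j where j: "j \<in> {1..n}" and mj: "0 < measure (psi j) {x}" by blast
    interpret rd: real_distribution "psi j" using RD[OF j] .
    have "\<exists>y\<in>{x}. P j y = E j"
      by (rule AE_pos_exists[OF rd.prob_space_axioms AEj[OF j] _ mj]) simp
    then have PE: "P j x = E j" by simp
    have Rnn: "0 \<le> Rf N m (G x) (H x)"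
      using Rf_nonneg[OF G0 H0] FH[of x] FQ[of x] Q1 by simp
    have fx: "0 < f j x - c"
    proof (rule ccontr)
      assume "\<not> 0 < f j x - c"
      then have "P j x \<le> 0" using Pform[OF xv, of j] Rnn by (simp add: mult_nonpos_nonneg)
      with PE Epos[OF j] show False by simp
    qed
    have "Rf N m (G x) (H x) < Rf N m (G x) 0"
      using Rf_strict[OF G0 Hp _ m1 mN] FH[of x] FQ[of x] Q1 by simp
    then have "E j < (f j x - c) * Rf N m (G x) 0"
      using PE Pform[OF xv, of j] fx mult_strict_left_mono by (metis)
    then have ev1: "eventually (\<lambda>y. E j < (f j y - c) * Rf N m (G y) (H y)) (at_left x)"
      by (rule order_tendstoD(1)[OF Tl[OF j]])
    have ev2: "eventually (\<lambda>y. y < x) (at_left x)"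
      by (rule ev_left[of "x - 1"]) auto
    have "eventually (\<lambda>y. False) (at_left x)"
      using ev1 ev2
    proof eventually_elim
      case (elim y)
      then have "E j < P j y" using Pform[of y j] xv by simp
      with Ple[OF j, of y] show False by simp
    qed
    then show False by (simp add: eventually_False trivial_limit_at_left_real)
  qed
  have supp: "P i x = E i" if i: "i \<in> {1..n}" and xs: "x \<in> dist_support (psi i)" for i x
  proof (rule ccontr)
    assume "P i x \<noteq> E i"
    then have lt: "P i x < E i" using Ple[OF i, of x] by simp
    have ev: "eventually (\<lambda>y. P i y < E i) (at x)"
    proof (cases "v < x")
      case True
      have "eventually (\<lambda>y. v < y) (at x)"
        by (rule order_tendstoD(1)[OF tendsto_ident_at True])
      then show ?thesis by eventually_elim (use Pzero Epos[OF i] in simp)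
    next
      case False
      then have xv: "x \<le> v" by simp
      have H0x: "H x = 0" by (rule noatom[OF xv])
      have Px: "P i x = (f i x - c) * Rf N m (G x) 0" using Pform[OF xv, of i] H0x by simp
      have left: "eventually (\<lambda>y. P i y < E i) (at_left x)"
      proof -
        have ev1: "eventually (\<lambda>y. (f i y - c) * Rf N m (G y) (H y) < E i) (at_left x)"
          by (rule order_tendstoD(2)[OF Tl[OF i]]) (use lt Px in simp)
        have ev2: "eventually (\<lambda>y. y < x) (at_left x)"
          by (rule ev_left[of "x - 1"]) auto
        from ev1 ev2 show ?thesis by eventually_elim (use Pform xv in simp)
      qed
      have right: "eventually (\<lambda>y. P i y < E i) (at_right x)"
      proof (cases "x < v")
        case True
        have ev1: "eventually (\<lambda>y. (f i y - c) * Rf N m (G y) (H y) < E i) (at_right x)"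
          by (rule order_tendstoD(2)[OF Tr[OF i]]) (use lt Px FH[of x] H0x in simp)
        have ev2: "eventually (\<lambda>y. y < v) (at_right x)"
          by (rule ev_right[of _ v]) (use True in auto)
        from ev1 ev2 show ?thesis by eventually_elim (use Pform in simp)
      next
        case False
        then have xv': "x = v" using xv by simp
        have "eventually (\<lambda>y. v < y) (at_right x)"
          by (rule ev_right[of _ "x + 1"]) (use xv' in auto)
        then show ?thesis by eventually_elim (use Pzero Epos[OF i] in simp)
      qed
      from left right show ?thesis by (simp add: eventually_at_split)
    qed
    then obtain d where d: "0 < d" "\<And>y. y \<noteq> x \<Longrightarrow> dist y x < d \<Longrightarrow> P i y < E i"
      unfolding eventually_at by blast
    interpret rd: real_distribution "psi i" using RD[OF i] .
    have "0 < measure (psi i) {x - d<..<x + d}" using xs d(1) unfolding dist_support_def by simp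
    then have "\<exists>y\<in>{x - d<..<x + d}. P i y = E i"
      by (intro AE_pos_exists[OF rd.prob_space_axioms AEj[OF i]]) auto
    then obtain y where y: "y \<in> {x - d<..<x + d}" "P i y = E i" by blast
    show False
    proof (cases "y = x")
      case True with y lt show ?thesis by simp
    next
      case False
      have "dist y x < d" using y(1) by (auto simp: dist_real_def)
      with d(2)[OF False] y(2) show ?thesis by simp
    qed
  qed

  have BR: "best_response l m n q f c v psi i x" if i: "i \<in> {1..n}" and PE: "P i x = E i" for i x
  proof -
    have "Sup (range (P i)) = E i"
      by (rule cSup_eq_maximum) (use PE Ple[OF i] in \<open>auto intro: range_eqI[of _ _ x]\<close>)
    then show ?thesis unfolding best_response_def P_def[symmetric] using PE by simp
  qed
  show ?thesis
  proof (rule ballI)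
    fix i assume i: "i \<in> {1..n}"
    interpret rd: real_distribution "psi i" using RD[OF i] .
    have h1: "\<forall>x\<in>dist_support (psi i). best_response l m n q f c v psi i x"
      using BR[OF i] supp[OF i] by blast
    define b where "b = g i c"
    have Pneg: "P i y < E i" if "y < b" for y
    proof (cases "y \<le> v")
      case True
      have "f i y < f i b" using f_mono i that by (simp add: strict_mono_less)
      also have "f i b = c" using fg_inv i b_def by simp
      finally have "f i y - c \<le> 0" by simp
      moreover have "0 \<le> Rf N m (G y) (H y)"
        using Rf_nonneg[OF G0 H0] FH[of y] FQ[of y] Q1 by simp
      ultimately have "P i y \<le> 0" using Pform[OF True, of i] by (simp add: mult_nonpos_nonneg)
      then show ?thesis using Epos[OF i] by simp
    qed (use Pzero Epos[OF i] in simp)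
    have mb: "measure (psi i) {..<b} = 0"
    proof (rule ccontr)
      assume "measure (psi i) {..<b} \<noteq> 0"
      then have "0 < measure (psi i) {..<b}" using measure_nonneg[of "psi i" "{..<b}"] by linarith
      then have "\<exists>y\<in>{..<b}. P i y = E i"
        by (intro AE_pos_exists[OF rd.prob_space_axioms AEj[OF i]]) auto
      then show False using Pneg by fastforce
    qed
    have mv: "measure (psi i) {v<..} = 0"
    proof (rule ccontr)
      assume "measure (psi i) {v<..} \<noteq> 0"
      then have "0 < measure (psi i) {v<..}" using measure_nonneg[of "psi i" "{v<..}"] by linarith
      then have "\<exists>y\<in>{v<..}. P i y = E i"
        by (intro AE_pos_exists[OF rd.prob_space_axioms AEj[OF i]]) auto
      then show False using Pzero Epos[OF i] by fastforce
    qed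
    have cv: "cdf (psi i) v = 1"
    proof -
      have "UNIV - {v<..} = {..v}" by auto
      then have "measure (psi i) {..v} = 1 - measure (psi i) {v<..}"
        using rd.prob_compl[of "{v<..}"] by simp
      then show ?thesis using mv unfolding cdf_def by simp
    qed
    have cb: "cdf (psi i) x = 0" if "x < b" for x
    proof -
      have "cdf (psi i) x \<le> measure (psi i) {..<b}"
        unfolding cdf_def using that by (intro rd.finite_measure_mono) auto
      then show ?thesis using mb rd.cdf_nonneg'[of x] by simp
    qed
    have cdfle1: "\<And>x. cdf (psi i) x \<le> 1" by (rule rd.cdf_le1')
    define S where "S = {x. cdf (psi i) x > 0}"
    have Sne: "S \<noteq> {}" using cv S_def by (auto intro!: exI[of _ v])
    have Sbdd: "bdd_below S"
      unfolding bdd_below_def S_def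
      by (rule exI[of _ b]) (use cb in \<open>force simp: not_less[symmetric]\<close>)
    have "lowL (psi i) \<in> dist_support (psi i)"
      unfolding dist_support_def mem_Collect_eq
    proof (intro allI impI)
      fix e :: real assume e: "e > 0"
      define L where "L = lowL (psi i)"
      have LS: "L = Inf S" unfolding L_def lowL_def S_def by simp
      have "L - e \<notin> S"
      proof
        assume "L - e \<in> S"
        then have "Inf S \<le> L - e" using Sbdd by (rule cInf_lower)
        with LS e show False by simp
      qed
      then have c1: "cdf (psi i) (L - e) = 0" using rd.cdf_nonneg'[of "L - e"] S_def by simp
      have "Inf S < L + e" using LS e by simp
      then obtain s where s: "s \<in> S" "s < L + e" using cInf_less_iff[OF Sne Sbdd] by blast
      have "L \<le> s" using LS cInf_lower[OF s(1) Sbdd] by simp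
      show "0 < measure (psi i) {L - e<..<L + e}"
        by (rule rd.pos_of_cdf[of _ s]) (use s e \<open>L \<le> s\<close> c1 S_def in auto)
    qed
    then have h2: "best_response l m n q f c v psi i (lowL (psi i))"
      using BR[OF i] supp[OF i] by blast
    define T where "T = {x. cdf (psi i) x = 1}"
    have Tne: "T \<noteq> {}" using cv T_def by auto
    have Tbdd: "bdd_below T"
      unfolding bdd_below_def T_def
      by (rule exI[of _ b]) (use cb in \<open>force simp: not_less[symmetric]\<close>)
    have "uppU (psi i) \<in> dist_support (psi i)"
      unfolding dist_support_def mem_Collect_eq
    proof (intro allI impI)
      fix e :: real assume e: "e > 0"
      define U where "U = uppU (psi i)"
      have US: "U = Inf T" unfolding U_def uppU_def T_def by simp
      have "U - e \<notin> T"
      proof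
        assume "U - e \<in> T"
        then have "Inf T \<le> U - e" using Tbdd by (rule cInf_lower)
        with US e show False by simp
      qed
      then have c1: "cdf (psi i) (U - e) < 1" using cdfle1[of "U - e"] T_def by fastforce
      have "Inf T < U + e" using US e by simp
      then obtain t where t: "t \<in> T" "t < U + e" using cInf_less_iff[OF Tne Tbdd] by blast
      have "U \<le> t" using US cInf_lower[OF t(1) Tbdd] by simp
      show "0 < measure (psi i) {U - e<..<U + e}"
        by (rule rd.pos_of_cdf[of _ t]) (use t e \<open>U \<le> t\<close> c1 T_def in auto)
    qed
    then have h3: "best_response l m n q f c v psi i (uppU (psi i))"
      using BR[OF i] supp[OF i] by blast
    show "(\<forall>x\<in>dist_support (psi i). best_response l m n q f c v psi i x)
           \<and> best_response l m n q f c v psi i (lowL (psi i))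
           \<and> best_response l m n q f c v psi i (uppU (psi i))"
      using h1 h2 h3 by blast
  qed
qed

end
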